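(* Let $X,Y$ be non-commuting indeterminates and $C=XYX^{-1}Y^{-1}$. Let $(R_n)_{n\in\mathbb Z}$ satisfy $$R_{2n}CR_{2n-2}=1+R_{2n-1},\qquad R_{2n+1}CR_{2n-1}=1+R_{2n}^4\qquad(n\in\mathbb Z),$$ with $R_1=YXY^{-1}$ and $R_2=Y$, and set $u_n=R_{2n}$, so that $u_1=Y$. Define $$y_1'=\big(Y^3+(1+X)Y^{-1}\big)X^{-1}Y^{-1},$$ $$y_2'=\big(Y+(1+X)Y^{-2}(1+X)Y^{-1}\big)X^{-1}Y^{-1},$$ $$y_3'=(1+X)Y^{-2}.$$ Then, as formal power series in a central variable $t$, $$\sum_{n\ge0}t^nu_{n+1}=\Big(1-ty_1'-t^2(1-ty_3')^{-1}y_2'\Big)^{-1}u_1.$$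
   Context: Work in the free skew field (non-commutative rational functions) over $\mathbb C$ generated by $X,Y$. The variable $t$ is a formal variable commuting with everything, and inverses of $1-(\text{terms of positive }t\text{-degree})$ are expanded as geometric series. *)

theory Defs
  imports "HOL-Computational_Algebra.Formal_Power_Series"
begin

text \<open>Noncommutative polynomials over C in the letters X (encoded False) and Y
(encoded True): finitely supported functions from words to complex.\<close>

type_synonym ncpoly = "bool list \<Rightarrow> complex"

definition is_ncpoly :: "ncpoly \<Rightarrow> bool" where
  "is_ncpoly p \<longleftrightarrow> finite {w. p w \<noteq> 0}"

definition ncpoly_mult :: "ncpoly \<Rightarrow> ncpoly \<Rightarrow> ncpoly" where
  "ncpoly_mult p q w = (\<Sum>k\<le>length w. p (take k w) * q (drop k w))"

definition ncpoly_add :: "ncpoly \<Rightarrow> ncpoly \<Rightarrow> ncpoly" where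
  "ncpoly_add p q w = p w + q w"

definition eval_word :: "'a::ring_1 \<Rightarrow> 'a \<Rightarrow> bool list \<Rightarrow> 'a" where
  "eval_word X Y w = foldr (\<lambda>b acc. (if b then Y else X) * acc) w 1"

definition eval_ncpoly ::
  "(complex \<Rightarrow> 'a::ring_1) \<Rightarrow> 'a \<Rightarrow> 'a \<Rightarrow> ncpoly \<Rightarrow> 'a" where
  "eval_ncpoly iota X Y p = (\<Sum>w\<in>{w. p w \<noteq> 0}. iota (p w) * eval_word X Y w)"

text \<open>Square n x n matrices over the free algebra: 'nat \<Rightarrow> nat \<Rightarrow> ncpoly',
only entries with indices < n matter.\<close>

definition full_matrix :: "nat \<Rightarrow> (nat \<Rightarrow> nat \<Rightarrow> ncpoly) \<Rightarrow> bool" where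
  "full_matrix n M \<longleftrightarrow>
     \<not> (\<exists>r < n. \<exists>A B. (\<forall>i<n. \<forall>k<r. is_ncpoly (A i k)) \<and> (\<forall>k<r. \<forall>j<n. is_ncpoly (B k j)) \<and>
          (\<forall>i<n. \<forall>j<n. M i j = (\<lambda>w. \<Sum>k<r. ncpoly_mult (A i k) (B k j) w)))"

definition invertible_over :: "nat \<Rightarrow> (nat \<Rightarrow> nat \<Rightarrow> 'a::ring_1) \<Rightarrow> bool" where
  "invertible_over n M \<longleftrightarrow> (\<exists>N.
      (\<forall>i<n. \<forall>j<n. (\<Sum>k<n. M i k * N k j) = (if i = j then 1 else 0)) \<and>
      (\<forall>i<n. \<forall>j<n. (\<Sum>k<n. N i k * M k j) = (if i = j then 1 else 0)))"

inductive_set generated_divring ::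
  "(complex \<Rightarrow> 'a::division_ring) \<Rightarrow> 'a \<Rightarrow> 'a \<Rightarrow> 'a set"
  for iota X Y where
  gen_const: "iota c \<in> generated_divring iota X Y"
| gen_X: "X \<in> generated_divring iota X Y"
| gen_Y: "Y \<in> generated_divring iota X Y"
| gen_add: "a \<in> generated_divring iota X Y \<Longrightarrow> b \<in> generated_divring iota X Y \<Longrightarrow>
            a + b \<in> generated_divring iota X Y"
| gen_uminus: "a \<in> generated_divring iota X Y \<Longrightarrow> - a \<in> generated_divring iota X Y"
| gen_mult: "a \<in> generated_divring iota X Y \<Longrightarrow> b \<in> generated_divring iota X Y \<Longrightarrow>
            a * b \<in> generated_divring iota X Y"
| gen_inverse: "a \<in> generated_divring iota X Y \<Longrightarrow> inverse a \<in> generated_divring iota X Y"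

text \<open>Cohn's characterisation: K (the type 'a) with central embedding iota of C and
elements X, Y is the free skew field on X, Y over C iff K is generated as a
division ring by C, X, Y (so it is a field of fractions of C<X,Y>) and every full
matrix over C<X,Y> becomes invertible in K (the universal / fully inverting field
of fractions of the fir C<X,Y>).\<close>

definition free_skew_field :: "(complex \<Rightarrow> 'a::division_ring) \<Rightarrow> 'a \<Rightarrow> 'a \<Rightarrow> bool" where
  "free_skew_field iota X Y \<longleftrightarrow>
     iota 0 = 0 \<and> iota 1 = 1 \<and>
     (\<forall>a b. iota (a + b) = iota a + iota b) \<and> (\<forall>a b. iota (a * b) = iota a * iota b) \<and>
     (\<forall>c z. iota c * z = z * iota c) \<and>
     generated_divring iota X Y = UNIV \<and>
     (\<forall>n M. (\<forall>i<n. \<forall>j<n. is_ncpoly (M i j)) \<longrightarrow> full_matrix n M \<longrightarrow>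
        invertible_over n (\<lambda>i j. eval_ncpoly iota X Y (M i j)))"

end

theory Submission
  imports Defs
begin


lemma mi1: "(x::'a::division_ring) \<noteq> 0 \<Longrightarrow> x * (inverse x * y) = y"
  by (simp add: mult.assoc[symmetric])
lemma mi2: "(x::'a::division_ring) \<noteq> 0 \<Longrightarrow> inverse x * (x * y) = y"
  by (simp add: mult.assoc[symmetric])

definition Gf :: "'a::division_ring \<Rightarrow> 'a \<Rightarrow> 'a" where
  "Gf X Y = (1+X+Y^4)*inverse Y*inverse X*inverse Y + (1+X)*inverse Y^2"

lemma L2:
  fixes X Y :: "'a::division_ring"
  assumes X0: "X \<noteq> 0" and Y0: "Y \<noteq> 0" and Q0: "1 + Y^4 \<noteq> 0" and P0: "1 + X + Y^4 \<noteq> 0"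
  shows "Gf (inverse ((1+X+Y^4)*inverse Y*inverse X) * ((1+Y^4)*inverse X) * ((1+X+Y^4)*inverse Y*inverse X))
            ((1+X+Y^4)*inverse Y*inverse X) = Gf X Y"
proof -
  define Q where "Q = 1 + Y^4"
  define P where "P = 1 + X + Y^4"
  have PQ: "P = Q + X" unfolding P_def Q_def by (simp add: algebra_simps)
  define b2 where "b2 = P*inverse Y*inverse X"
  define a2 where "a2 = Q * inverse X"
  have iY0: "inverse Y \<noteq> 0" and iX0: "inverse X \<noteq> 0"
    using X0 Y0 by (auto simp: nonzero_imp_inverse_nonzero)
  have P0': "P \<noteq> 0" and Q0': "Q \<noteq> 0" using P0 Q0 P_def Q_def by auto
  have b20: "b2 \<noteq> 0" unfolding b2_def using P0' iY0 iX0 by simp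
  have a20: "a2 \<noteq> 0" unfolding a2_def using Q0' iX0 by simp
  have ib2: "inverse b2 = X*Y*inverse P"
    unfolding b2_def using P0' iY0 iX0 X0 Y0
    by (simp add: nonzero_inverse_mult_distrib nonzero_inverse_inverse_eq mult.assoc)
  have ia2: "inverse a2 = X * inverse Q"
    unfolding a2_def using Q0' iX0 X0
    by (simp add: nonzero_inverse_mult_distrib nonzero_inverse_inverse_eq mult.assoc)
  define X2 where "X2 = inverse b2 * a2 * b2"
  have X20: "X2 \<noteq> 0" unfolding X2_def using a20 b20 by (simp add: nonzero_imp_inverse_nonzero)
  have iX2: "inverse X2 = inverse b2 * inverse a2 * b2"
    unfolding X2_def using a20 b20
    by (simp add: nonzero_inverse_mult_distrib nonzero_inverse_inverse_eq nonzero_imp_inverse_nonzero mult.assoc)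
  have s1: "inverse b2 * inverse X2 * inverse b2 = inverse b2 * inverse b2 * inverse a2"
    unfolding iX2 using b20 by (simp add: mult.assoc mi1)
  have s2: "1 + X2 = inverse b2 * (1 + a2) * b2"
    unfolding X2_def using b20 by (simp add: algebra_simps)
  have G1: "Gf X2 b2 = inverse b2 * (1+a2) * inverse b2 * inverse a2 + b2*b2*inverse a2
              + inverse b2 * (1+a2) * inverse b2"
  proof -
    have "Gf X2 b2 = (1+X2)*(inverse b2 * inverse X2 * inverse b2) + b2^4 * (inverse b2 * inverse X2 * inverse b2)
            + (1+X2)*(inverse b2 * inverse b2)"
      unfolding Gf_def by (simp add: algebra_simps power2_eq_square)
    also have "\<dots> = inverse b2 * (1+a2) * inverse b2 * inverse a2 + b2*b2*inverse a2
              + inverse b2 * (1+a2) * inverse b2"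
      unfolding s1 s2 using b20
      by (simp add: mult.assoc mi1 mi2 numeral_eq_Suc)
    finally show ?thesis .
  qed
  have a2p: "1 + a2 = P * inverse X" unfolding a2_def PQ using X0 by (simp add: algebra_simps)
  have ia2p: "inverse a2 + 1 = P * inverse Q" unfolding ia2 PQ using Q0' by (simp add: algebra_simps)
  have t1: "inverse b2 * (1+a2) * inverse b2 = X*Y*Y*inverse P"
    unfolding ib2 a2p using P0' X0 by (simp add: mult.assoc mi1 mi2)
  have t2: "inverse b2 * (1+a2) * inverse b2 * inverse a2 + inverse b2 * (1+a2) * inverse b2
              = X*Y*Y*inverse Q"
  proof -
    have "inverse b2 * (1+a2) * inverse b2 * inverse a2 + inverse b2 * (1+a2) * inverse b2
           = (inverse b2 * (1+a2) * inverse b2) * (inverse a2 + 1)" by (simp add: algebra_simps)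
    also have "\<dots> = X*Y*Y*inverse Q" unfolding t1 ia2p using P0' by (simp add: mult.assoc mi2)
    finally show ?thesis .
  qed
  have QY: "Q * inverse Y = inverse Y * Q"
  proof -
    have "Y * Q = Q * Y" unfolding Q_def by (simp add: algebra_simps power_commutes)
    hence "inverse Y * (Y * Q) * inverse Y = inverse Y * (Q * Y) * inverse Y" by simp
    thus ?thesis using Y0 by (simp add: mult.assoc mi2)
  qed
  have QYQ: "Q * inverse Y * inverse Q = inverse Y"
    using Q0' by (simp add: QY mult.assoc)
  have t3: "b2*b2*inverse a2 = P*inverse Y*inverse X*inverse Y + P*inverse Y*inverse Y*inverse Q"
  proof -
    have "b2*b2*inverse a2 = P*inverse Y*inverse X*(Q + X)*inverse Y*inverse Q"
      unfolding b2_def ia2 PQ using X0 by (simp add: mult.assoc mi2)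
    also have "\<dots> = P*inverse Y*inverse X*(Q*inverse Y*inverse Q) + P*inverse Y*(inverse X * X)*inverse Y*inverse Q"
      by (simp add: algebra_simps)
    also have "\<dots> = P*inverse Y*inverse X*inverse Y + P*inverse Y*inverse Y*inverse Q"
      unfolding QYQ using X0 by simp
    finally show ?thesis .
  qed
  have Y4: "Y^4 = Y*Y*Y*Y" by (simp add: numeral_eq_Suc mult.assoc)
  have t4: "X*Y*Y*inverse Q + P*inverse Y*inverse Y*inverse Q = (1+X)*inverse Y*inverse Y"
  proof -
    have "X*Y*Y*inverse Q + P*inverse Y*inverse Y*inverse Q
         = X*(Y*Y + inverse Y*inverse Y)*inverse Q + Q*inverse Y*inverse Y*inverse Q"
      unfolding PQ by (simp add: algebra_simps)
    also have "Y*Y + inverse Y*inverse Y = inverse Y*inverse Y*Q"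
      unfolding Q_def Y4 using Y0 by (simp add: algebra_simps mi2)
    also have "Q*inverse Y*inverse Y*inverse Q = inverse Y * inverse Y"
      by (metis QY QYQ mult.assoc)
    finally show ?thesis using Q0' by (simp add: algebra_simps mult.assoc)
  qed
  have "Gf X2 b2 = X*Y*Y*inverse Q + b2*b2*inverse a2"
    using G1 t2 by (simp add: algebra_simps)
  also have "\<dots> = P*inverse Y*inverse X*inverse Y + (1+X)*inverse Y*inverse Y"
    unfolding t3 using t4 by (simp add: algebra_simps)
  also have "\<dots> = Gf X Y" unfolding Gf_def P_def by (simp add: power2_eq_square mult.assoc)
  finally have "Gf X2 b2 = Gf X Y" .
  thus ?thesis unfolding X2_def b2_def a2_def P_def Q_def .
qed


context includes fps_syntax begin



lemma fps_part:
  fixes y1 y2 y3 :: "'a::division_ring" and v :: "nat \<Rightarrow> 'a"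
  assumes v1: "v 1 = y1 * v 0"
    and vrec: "\<And>n. v (n+2) = (y1+y3)*v (n+1) + (y2 - y3*y1)*v n"
  shows "Abs_fps v = inverse (1 - fps_X * fps_const y1
                       - fps_X ^ 2 * inverse (1 - fps_X * fps_const y3) * fps_const y2)
            * fps_const (v 0)"
proof -
  define U where "U = Abs_fps v"
  define E where "E = 1 - fps_X * fps_const y3"
  define D where "D = 1 - fps_X * fps_const y1 - fps_X ^ 2 * inverse E * fps_const y2"
  have E0: "E $ 0 \<noteq> 0" unfolding E_def by simp
  have D0: "D $ 0 \<noteq> 0" unfolding D_def by (simp add: power2_eq_square mult.assoc)
  have comm: "\<And>f::'a fps. fps_X * f = f * fps_X" by (rule fps_mult_fps_X_commute)
  have EX2: "E * (fps_X ^ 2 * inverse E * fps_const y2) = fps_X^2 * fps_const y2"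
  proof -
    have "E * fps_X ^ 2 = fps_X^2 * E" by (metis comm power2_eq_square mult.assoc)
    hence "E * (fps_X ^ 2 * inverse E * fps_const y2) = fps_X^2 * (E * inverse E) * fps_const y2"
      by (simp add: mult.assoc[symmetric])
    thus ?thesis using inverse_mult_eq_1'[OF E0] by simp
  qed
  have EX1: "E * (fps_X * fps_const y1) = fps_X * fps_const y1 - fps_X * (fps_X * fps_const (y3*y1))"
  proof -
    have "fps_const y3 * (fps_X * fps_const y1) = fps_X * fps_const (y3*y1)"
      by (metis comm fps_const_mult mult.assoc)
    thus ?thesis unfolding E_def by (simp add: algebra_simps)
  qed
  have ED: "E * D = 1 - fps_X * fps_const (y1+y3) + fps_X * (fps_X * fps_const (y3*y1 - y2))"
  proof -
    have "E * D = E - E * (fps_X * fps_const y1) - E * (fps_X ^ 2 * inverse E * fps_const y2)"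
      unfolding D_def by (simp add: algebra_simps)
    also have "\<dots> = 1 - fps_X * fps_const (y1+y3) + fps_X * (fps_X * fps_const (y3*y1 - y2))"
      unfolding EX1 EX2 unfolding E_def
      by (simp add: algebra_simps power2_eq_square fps_const_add[symmetric] fps_const_sub[symmetric]
           del: fps_const_add fps_const_sub)
    finally show ?thesis .
  qed
  have key0: "(1 - fps_X * fps_const (y1+y3) + fps_X * (fps_X * fps_const (y3*y1 - y2))) * U = E * fps_const (v 0)"
  proof (rule fps_ext)
    fix n
    show "((1 - fps_X * fps_const (y1+y3) + fps_X * (fps_X * fps_const (y3*y1 - y2))) * U) $ n = (E * fps_const (v 0)) $ n"
    proof (cases n)
      case 0 thus ?thesis unfolding E_def U_def by (simp add: algebra_simps)
    next
      case (Suc m)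
      show ?thesis
      proof (cases m)
        case 0 thus ?thesis using Suc v1 unfolding E_def U_def by (simp add: algebra_simps)
      next
        case (Suc k)
        have "v (k+2) = (y1+y3)*v (k+1) + (y2 - y3*y1)*v k" by (rule vrec)
        thus ?thesis using Suc \<open>n = Suc m\<close> unfolding E_def U_def by (simp add: algebra_simps)
      qed
    qed
  qed
  have key: "(E * D) * U = E * fps_const (v 0)" using key0 ED by simp
  have DU: "D * U = fps_const (v 0)"
  proof -
    have "inverse E * (E * (D * U)) = inverse E * (E * fps_const (v 0))"
      using key by (simp add: mult.assoc)
    thus ?thesis using inverse_mult_eq_1[OF E0] by (simp add: mult.assoc[symmetric])
  qed
  have "U = inverse D * (D * U)" using inverse_mult_eq_1[OF D0] by (simp add: mult.assoc[symmetric])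
  also have "\<dots> = inverse D * fps_const (v 0)" by (simp only: DU)
  finally show ?thesis unfolding U_def D_def E_def .
qed


end


lemma state_lemma:
  fixes C a b p a2 b2 :: "'a::division_ring"
  assumes a0: "a \<noteq> 0" and b0: "b \<noteq> 0" and K: "b*C*a = a*b" and E1: "b*C*p = 1+a"
    and O1: "a2*C*a = 1+b^4" and E2: "b2*C*b = 1+a2"
  shows "(b2 + C*p)*inverse b = Gf (inverse b*a*b) b"
    and "a2 = (1+b^4)*inverse (inverse b*a*b)"
    and "b2 = (1+inverse b*a*b+b^4)*inverse b*inverse (inverse b*a*b)"
proof -
  define X where "X = inverse b*a*b"
  have X0: "X \<noteq> 0" unfolding X_def using a0 b0 by (simp add: nonzero_imp_inverse_nonzero)
  have iX: "inverse X = inverse b * inverse a * b" unfolding X_def using a0 b0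
    by (simp add: nonzero_inverse_mult_distrib nonzero_inverse_inverse_eq nonzero_imp_inverse_nonzero mult.assoc)
  have Ca: "C*a = X" unfolding X_def
  proof -
    have "inverse b * (b*C*a) = inverse b*(a*b)" using K by simp
    thus "C*a = inverse b*a*b" using b0 by (simp add: mult.assoc mi2)
  qed
  have a2: "a2 = (1+b^4)*inverse X"
  proof -
    have "a2*X*inverse X = (1+b^4)*inverse X" using O1 Ca by (simp add: mult.assoc)
    thus ?thesis using X0 by (simp add: mult.assoc)
  qed
  have Cb: "C*b = X*b*inverse X"
  proof -
    have "C = X * inverse a" using Ca a0 by (metis mult.assoc right_inverse mult_1_right)
    hence "C*b = X * (inverse a * b)" by (simp add: mult.assoc)
    also have "inverse a * b = b * inverse X" unfolding iX using b0 by (simp add: mult.assoc mi1)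
    finally show ?thesis by (simp add: mult.assoc)
  qed
  have b2: "b2 = (1+X+b^4)*inverse b*inverse X"
  proof -
    have "b2*(X*b*inverse X) = 1 + a2" using E2 Cb by (simp add: mult.assoc)
    hence "b2*(X*b*inverse X)*(X*inverse b*inverse X) = (1 + a2)*(X*inverse b*inverse X)" by simp
    hence "b2 = (1 + a2)*(X*inverse b*inverse X)" using X0 b0 by (simp add: mult.assoc mi1 mi2)
    also have "\<dots> = (X + (1+b^4)*(inverse X*X))*inverse b*inverse X" unfolding a2
      by (simp add: algebra_simps)
    also have "\<dots> = (1+X+b^4)*inverse b*inverse X" using X0 by (simp add: algebra_simps)
    finally show ?thesis .
  qed
  have Cp: "C*p = (1+X)*inverse b"
  proof -
    have "inverse b * (b*C*p) = inverse b * (1+a)" using E1 by simp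
    hence "C*p = inverse b + inverse b * a" using b0 by (simp add: mult.assoc mi2 algebra_simps)
    also have "inverse b * a = X * inverse b" unfolding X_def using b0 by (simp add: mult.assoc)
    finally show ?thesis by (simp add: algebra_simps)
  qed
  show "(b2 + C*p)*inverse b = Gf (inverse b*a*b) b"
    unfolding X_def[symmetric] b2 Cp Gf_def by (simp add: algebra_simps power2_eq_square)
  show "a2 = (1+b^4)*inverse (inverse b*a*b)" using a2 X_def by simp
  show "b2 = (1+inverse b*a*b+b^4)*inverse b*inverse (inverse b*a*b)" using b2 X_def by simp
qed

lemma y_identities:
  fixes X Y :: "'a::division_ring"
  assumes X0: "X \<noteq> 0" and Y0: "Y \<noteq> 0"
  shows "(Y^3 + (1 + X) * inverse Y) * inverse X * inverse Y + (1 + X) * inverse Y ^ 2 = Gf X Y"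
    and "(Y + (1 + X) * inverse Y ^ 2 * (1 + X) * inverse Y) * inverse X * inverse Y
         - (1 + X) * inverse Y ^ 2 * ((Y^3 + (1 + X) * inverse Y) * inverse X * inverse Y)
         = - (X * Y * inverse X * inverse Y)"
proof -
  have Y3: "Y^3 = Y^4 * inverse Y" using Y0 by (simp add: numeral_eq_Suc mult.assoc)
  show "(Y^3 + (1 + X) * inverse Y) * inverse X * inverse Y + (1 + X) * inverse Y ^ 2 = Gf X Y"
    unfolding Gf_def Y3 by (simp add: algebra_simps)
  have e: "inverse Y ^ 2 * Y^3 = Y" using Y0 by (simp add: numeral_eq_Suc mult.assoc mi2)
  have "(1 + X) * inverse Y ^ 2 * (Y^3 + (1 + X) * inverse Y) = (1+X)*Y + (1 + X) * inverse Y ^ 2 * (1 + X) * inverse Y"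
  proof -
    have "(1 + X) * inverse Y ^ 2 * (Y^3 + (1 + X) * inverse Y) = (1 + X) * (inverse Y ^ 2 * Y^3) + (1 + X) * inverse Y ^ 2 * (1 + X) * inverse Y"
      by (simp add: algebra_simps)
    thus ?thesis by (simp only: e)
  qed
  thus "(Y + (1 + X) * inverse Y ^ 2 * (1 + X) * inverse Y) * inverse X * inverse Y
         - (1 + X) * inverse Y ^ 2 * ((Y^3 + (1 + X) * inverse Y) * inverse X * inverse Y)
         = - (X * Y * inverse X * inverse Y)"
  proof -
    assume h: "(1 + X) * inverse Y ^ 2 * (Y^3 + (1 + X) * inverse Y) = (1+X)*Y + (1 + X) * inverse Y ^ 2 * (1 + X) * inverse Y"
    have "(1 + X) * inverse Y ^ 2 * ((Y^3 + (1 + X) * inverse Y) * inverse X * inverse Y)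
        = ((1 + X) * inverse Y ^ 2 * (Y^3 + (1 + X) * inverse Y)) * inverse X * inverse Y"
      by (simp only: mult.assoc)
    also have "\<dots> = ((1+X)*Y + (1 + X) * inverse Y ^ 2 * (1 + X) * inverse Y) * inverse X * inverse Y"
      by (simp only: h)
    finally show ?thesis by (simp add: algebra_simps)
  qed
qed



lemma eval_support:
  assumes i0: "iota 0 = 0" and fin: "finite S" and sub: "{w. p w \<noteq> 0} \<subseteq> S"
  shows "eval_ncpoly iota X Y p = (\<Sum>w\<in>S. iota (p w) * eval_word X Y w)"
  unfolding eval_ncpoly_def
  by (rule sum.mono_neutral_left[OF fin sub]) (auto simp: i0)

lemma eval_nonzero:
  fixes iota :: "complex \<Rightarrow> 'a::division_ring"
  assumes free: "free_skew_field iota X Y" and isp: "is_ncpoly p" and pnz: "p wz \<noteq> 0"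
  shows "eval_ncpoly iota X Y p \<noteq> 0"
proof -
  have full: "full_matrix 1 (\<lambda>i j. p)"
    unfolding full_matrix_def
  proof (rule notI, elim exE conjE)
    fix r :: nat and A B :: "nat \<Rightarrow> nat \<Rightarrow> ncpoly"
    assume r: "r < 1" and h: "\<forall>i<1. \<forall>j<1. p = (\<lambda>w. \<Sum>k<r. ncpoly_mult (A i k) (B k j) w)"
    have "p = (\<lambda>w. \<Sum>k<r. ncpoly_mult (A 0 k) (B k 0) w)" using h by blast
    with r have "p = (\<lambda>w. 0)" by simp
    with pnz show False by simp
  qed
  have inv: "\<forall>n M. (\<forall>i<n. \<forall>j<n. is_ncpoly (M i j)) \<longrightarrow> full_matrix n M \<longrightarrow>
        invertible_over n (\<lambda>i j. eval_ncpoly iota X Y (M i j))"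
    using free unfolding free_skew_field_def by (elim conjE) assumption
  have "invertible_over 1 (\<lambda>i j. eval_ncpoly iota X Y p)"
    using inv[rule_format, of 1 "\<lambda>i j. p"] isp full by simp
  then obtain N where "eval_ncpoly iota X Y p * N 0 0 = 1"
    unfolding invertible_over_def by auto
  thus ?thesis by (metis mult_zero_left zero_neq_one)
qed

lemma free_consequences:
  fixes iota :: "complex \<Rightarrow> 'a::division_ring"
  assumes free: "free_skew_field iota X Y"
  shows "X \<noteq> 0" and "Y \<noteq> 0" and "\<And>\<mu>. X*Y \<noteq> iota \<mu> * (Y*X)"
proof -
  have i0: "iota 0 = 0" and i1: "iota 1 = 1" and iadd: "\<And>a b. iota (a+b) = iota a + iota b"
    using free unfolding free_skew_field_def by auto
  have ineg: "\<And>a. iota (-a) = - iota a"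
  proof -
    fix a
    have "iota (-a) + iota a = 0" using iadd[of "-a" a] i0 by simp
    thus "iota (-a) = - iota a" by (simp add: eq_neg_iff_add_eq_0)
  qed
  let ?pX = "\<lambda>w::bool list. if w = [False] then (1::complex) else 0"
  have "eval_ncpoly iota X Y ?pX \<noteq> 0"
    by (rule eval_nonzero[OF free, where wz="[False]"]) (auto simp: is_ncpoly_def)
  moreover have "eval_ncpoly iota X Y ?pX = X"
  proof -
    have "eval_ncpoly iota X Y ?pX = (\<Sum>w\<in>{[False]}. iota (?pX w) * eval_word X Y w)"
      by (rule eval_support[where iota=iota, OF i0]) auto
    thus ?thesis by (simp add: i1 eval_word_def)
  qed
  ultimately show "X \<noteq> 0" by simp
  let ?pY = "\<lambda>w::bool list. if w = [True] then (1::complex) else 0"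
  have "eval_ncpoly iota X Y ?pY \<noteq> 0"
    by (rule eval_nonzero[OF free, where wz="[True]"]) (auto simp: is_ncpoly_def)
  moreover have "eval_ncpoly iota X Y ?pY = Y"
  proof -
    have "eval_ncpoly iota X Y ?pY = (\<Sum>w\<in>{[True]}. iota (?pY w) * eval_word X Y w)"
      by (rule eval_support[where iota=iota, OF i0]) auto
    thus ?thesis by (simp add: i1 eval_word_def)
  qed
  ultimately show "Y \<noteq> 0" by simp
  fix \<mu>
  let ?p = "\<lambda>w::bool list. if w = [False,True] then (1::complex) else if w = [True,False] then -\<mu> else 0"
  have fin: "finite {w. ?p w \<noteq> 0}"
    by (rule finite_subset[of _ "{[False,True],[True,False]}"]) auto
  have "eval_ncpoly iota X Y ?p \<noteq> 0"
    by (rule eval_nonzero[OF free, where wz="[False,True]"]) (use fin in \<open>auto simp: is_ncpoly_def\<close>)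
  moreover have "eval_ncpoly iota X Y ?p = X*Y - iota \<mu> * (Y*X)"
  proof -
    have "eval_ncpoly iota X Y ?p = (\<Sum>w\<in>{[False,True],[True,False]}. iota (?p w) * eval_word X Y w)"
      by (rule eval_support[where iota=iota, OF i0]) auto
    thus ?thesis by (simp add: i1 ineg eval_word_def)
  qed
  ultimately show "X*Y \<noteq> iota \<mu> * (Y*X)" by simp
qed

lemma sq_scalar:
  fixes iota :: "complex \<Rightarrow> 'a::division_ring"
  assumes i0: "iota 0 = 0" and iadd: "\<And>a b. iota (a+b) = iota a + iota b"
    and imult: "\<And>a b. iota (a*b) = iota a * iota b" and icent: "\<And>c z. iota c * z = z * iota c"
    and sq: "x^2 = iota c"
  shows "\<exists>z. x = iota z"
proof -
  have ineg: "\<And>a. iota (-a) = - iota a"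
  proof -
    fix a
    have "iota (-a) + iota a = 0" using iadd[of "-a" a] i0 by simp
    thus "iota (-a) = - iota a" by (simp add: eq_neg_iff_add_eq_0)
  qed
  define z where "z = csqrt c"
  have zz: "z*z = c" unfolding z_def using power2_csqrt[of c] by (simp add: power2_eq_square)
  have "(x - iota z)*(x + iota z) = x*x + x*iota z - iota z*x - iota z * iota z"
    by (simp add: algebra_simps)
  also have "\<dots> = x^2 - iota z * iota z" using icent[of z x] by (simp add: power2_eq_square)
  also have "\<dots> = 0" using sq imult[of z z] zz by simp
  finally have "x - iota z = 0 \<or> x + iota z = 0" by simp
  hence "x = iota z \<or> x = iota (-z)" by (auto simp: ineg eq_neg_iff_add_eq_0)
  thus ?thesis by blast
qed

lemma quartic_scalar:
  fixes iota :: "complex \<Rightarrow> 'a::division_ring"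
  assumes i0: "iota 0 = 0" and i1: "iota 1 = 1" and iadd: "\<And>a b. iota (a+b) = iota a + iota b"
    and imult: "\<And>a b. iota (a*b) = iota a * iota b" and icent: "\<And>c z. iota c * z = z * iota c"
    and q: "x^4 = -1"
  shows "\<exists>z. x = iota z"
proof -
  have ineg: "iota (-1) = - 1"
  proof -
    have "iota (-1) + iota 1 = 0" using iadd[of "-1" 1] i0 by simp
    thus ?thesis using i1 by (simp add: eq_neg_iff_add_eq_0)
  qed
  have "(x^2)^2 = iota (-1)" using q ineg by (simp add: power_mult[symmetric])
  then obtain z1 where "x^2 = iota z1" using sq_scalar[OF i0 iadd imult icent] by blast
  thus ?thesis using sq_scalar[OF i0 iadd imult icent] by blast
qed



theorem theorem4p9:
  fixes iota :: "complex \<Rightarrow> 'a::division_ring" and X Y :: 'a and R :: "int \<Rightarrow> 'a"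
  assumes free: "free_skew_field iota X Y"
    and rec_even: "\<And>n::int. R (2*n) * (X * Y * inverse X * inverse Y) * R (2*n - 2) = 1 + R (2*n - 1)"
    and rec_odd: "\<And>n::int. R (2*n + 1) * (X * Y * inverse X * inverse Y) * R (2*n - 1) = 1 + R (2*n) ^ 4"
    and R1: "R 1 = Y * X * inverse Y"
    and R2: "R 2 = Y"
  shows "let u = (\<lambda>n::int. R (2*n));
             y1 = (Y^3 + (1 + X) * inverse Y) * inverse X * inverse Y;
             y2 = (Y + (1 + X) * inverse Y ^ 2 * (1 + X) * inverse Y) * inverse X * inverse Y;
             y3 = (1 + X) * inverse Y ^ 2
         in Abs_fps (\<lambda>n. u (int n + 1)) =
            inverse (1 - fps_X * fps_const y1
                       - fps_X ^ 2 * inverse (1 - fps_X * fps_const y3) * fps_const y2)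
            * fps_const (u 1)"
proof -
  have fs: "iota 0 = 0 \<and> iota 1 = 1 \<and> (\<forall>a b. iota (a+b) = iota a + iota b) \<and>
      (\<forall>a b. iota (a*b) = iota a * iota b) \<and> (\<forall>c z. iota c * z = z * iota c)"
    using free unfolding free_skew_field_def by (elim conjE) (intro conjI; assumption)
  have i0: "iota 0 = 0" using fs by blast
  have i1: "iota 1 = 1" using fs by blast
  have imult: "\<And>a b. iota (a*b) = iota a * iota b" using fs by blast
  have iadd: "\<And>a b. iota (a+b) = iota a + iota b" using fs by blast
  have icent: "\<And>c z. iota c * z = z * iota c" using fs by blast
  have X0: "X \<noteq> 0" and Y0: "Y \<noteq> 0" and nXY: "\<And>\<mu>. X*Y \<noteq> iota \<mu> * (Y*X)"
    using free_consequences[OF free] by auto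
  define C where "C = X * Y * inverse X * inverse Y"
  have RE: "\<And>n. R (2*n) * C * R (2*n - 2) = 1 + R (2*n - 1)" using rec_even unfolding C_def .
  have RO: "\<And>n. R (2*n + 1) * C * R (2*n - 1) = 1 + R (2*n) ^ 4" using rec_odd unfolding C_def .
  have Cne: "\<And>\<mu>. C \<noteq> iota \<mu>"
  proof
    fix \<mu> assume h: "C = iota \<mu>"
    have "C*(Y*X) = X*Y" unfolding C_def using X0 Y0 by (simp add: mult.assoc mi2)
    hence "iota \<mu> * (Y*X) = X*Y" using h by simp
    thus False using nXY[of \<mu>] by simp
  qed
  have C0: "C \<noteq> 0" using Cne[of 0] i0 by simp
  have C1: "C \<noteq> 1" using Cne[of 1] i1 by simp
  have evnz: "\<And>n. R (2*n) \<noteq> 0"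
  proof
    fix n assume h: "R (2*n) = 0"
    have "1 + R (2*n - 1) = 0" using RE[of n] h by simp
    hence m1: "R (2*n - 1) = -1" by (simp add: add_eq_0_iff)
    have e: "2*(n+1) = 2*n+2" "2*n+2-2 = 2*n" "2*n+2-1 = 2*n+1" by simp_all
    have a: "R (2*n + 2) * C * R (2*n) = 1 + R (2*n + 1)" using RE[of "n+1", unfolded e] .
    hence "0 = 1 + R (2*n + 1)" by (simp only: h mult_zero_right)
    hence m2: "R (2*n + 1) = -1" by (metis add_eq_0_iff)
    have b: "R (2*n + 1) * C * R (2*n - 1) = 1 + R (2*n) ^ 4" using RO[of n] .
    hence "R (2*n + 1) * C * R (2*n - 1) = 1" by (simp only: h) simp
    hence "C = 1" by (simp only: m1 m2) simp
    with C1 show False by simp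
  qed
  have oddnz: "\<And>n. R (2*n - 1) \<noteq> 0"
  proof
    fix n assume h: "R (2*n - 1) = 0"
    have "1 + R (2*n) ^ 4 = 0" using RO[of n] h by simp
    hence q1: "R (2*n) ^ 4 = -1" by (simp add: add_eq_0_iff)
    have e: "2*(n-1) = 2*n-2" "2*n-2+1 = 2*n-1" "2*n-2-1 = 2*n-3" by simp_all
    have a: "R (2*n - 1) * C * R (2*n - 3) = 1 + R (2*n - 2) ^ 4" using RO[of "n-1", unfolded e] .
    hence "0 = 1 + R (2*n - 2) ^ 4" by (simp only: h mult_zero_right mult_zero_left)
    hence "1 + R (2*n - 2) ^ 4 = 0" by simp
    hence q2: "R (2*n - 2) ^ 4 = -1" by (simp add: add_eq_0_iff)
    have one: "R (2*n) * C * R (2*n - 2) = 1" using RE[of n] h by simp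
    obtain z1 where z1: "R (2*n) = iota z1" using quartic_scalar[OF i0 i1 iadd imult icent q1] by blast
    obtain z2 where z2: "R (2*n - 2) = iota z2" using quartic_scalar[OF i0 i1 iadd imult icent q2] by blast
    have "R (2*n) * C * R (2*n - 2) = C * iota (z1*z2)"
      unfolding z1 z2 imult by (simp add: icent[of z1 C] mult.assoc)
    hence Cw: "C * iota (z1*z2) = 1" using one by simp
    hence "z1*z2 \<noteq> 0" using i0 by auto
    hence "(z1*z2) * inverse (z1*z2) = 1" by (rule right_inverse)
    hence "iota (z1*z2) * iota (inverse (z1*z2)) = 1" by (metis imult i1)
    hence "C = C * iota (z1*z2) * iota (inverse (z1*z2))" by (simp add: mult.assoc)
    hence "C = iota (inverse (z1*z2))" using Cw by simp
    with Cne show False by blast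
  qed
  have par: "\<And>j::int. \<exists>n. j = 2*n \<or> j = 2*n - 1"
  proof -
    fix j :: int
    have "j = 2*(j div 2) \<or> j = 2*((j+1) div 2) - 1" by presburger
    thus "\<exists>n. j = 2*n \<or> j = 2*n - 1" by blast
  qed
  have Rnz: "\<And>j. R j \<noteq> 0"
  proof -
    fix j :: int
    obtain n where "j = 2*n \<or> j = 2*n - 1" using par by blast
    thus "R j \<noteq> 0" using evnz oddnz by auto
  qed
  have F: "\<And>j. R (j+2) * C * R j * R (j+1) = R (j+1) * (R (j+2) * C * R j)"
  proof -
    fix j :: int
    obtain m where "j = 2*m \<or> j = 2*m - 1" using par by blast
    thus "R (j+2) * C * R j * R (j+1) = R (j+1) * (R (j+2) * C * R j)"
    proof
      assume j: "j = 2*m"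
      have e: "2*(m+1) = j+2" "j+2-2 = j" "j+2-1 = j+1" using j by simp_all
      have "R (j+2) * C * R j = 1 + R (j+1)" using RE[of "m+1", unfolded e] .
      thus ?thesis by (simp add: algebra_simps)
    next
      assume j: "j = 2*m - 1"
      have e: "2*m = j+1" "j+1+1 = j+2" "j+1-1 = j" using j by simp_all
      have "R (j+2) * C * R j = 1 + R (j+1) ^ 4" using RO[of m, unfolded e] .
      thus ?thesis by (simp add: algebra_simps power_commutes)
    qed
  qed
  have K: "\<And>j. 1 \<le> j \<Longrightarrow> R (j+1) * C * R j = R j * R (j+1)"
  proof -
    fix j :: int assume "1 \<le> j"
    thus "R (j+1) * C * R j = R j * R (j+1)"
    proof (induction j rule: int_ge_induct)
      case base
      show ?case using X0 Y0 unfolding C_def by (simp add: R1 R2 mult.assoc mi2)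
    next
      case (step j)
      have "(R (j+2) * C * R (j+1) - R (j+1) * R (j+2)) * (C * R j)
            = R (j+2) * C * (R (j+1) * C * R j) - R (j+1) * (R (j+2) * C * R j)"
        by (simp add: algebra_simps)
      also have "\<dots> = R (j+2) * C * R j * R (j+1) - R (j+1) * (R (j+2) * C * R j)"
        using step.IH by (simp add: mult.assoc)
      also have "\<dots> = 0" using F[of j] by simp
      finally have "R (j+2) * C * R (j+1) - R (j+1) * R (j+2) = 0"
        using C0 Rnz[of j] by simp
      thus ?case by (simp add: add.assoc)
    qed
  qed

  define u where "u = (\<lambda>k::int. R (2*k))"
  define a where "a = (\<lambda>k::int. R (2*k - 1))"
  define Xk where "Xk = (\<lambda>k. inverse (u k) * a k * u k)"
  have unz: "\<And>k. u k \<noteq> 0" unfolding u_def using Rnz by simp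
  have anz: "\<And>k. a k \<noteq> 0" unfolding a_def using Rnz by simp
  have Xknz: "\<And>k. Xk k \<noteq> 0" unfolding Xk_def using unz anz by (simp add: nonzero_imp_inverse_nonzero)
  have SL: "\<And>k. 1 \<le> k \<Longrightarrow> (u (k+1) + C*u (k-1))*inverse (u k) = Gf (Xk k) (u k)
     \<and> a (k+1) = (1+u k^4)*inverse (Xk k)
     \<and> u (k+1) = (1+Xk k+u k^4)*inverse (u k)*inverse (Xk k)
     \<and> 1 + u k^4 \<noteq> 0"
  proof -
    fix k :: int assume k: "1 \<le> k"
    have k1: "1 \<le> 2*k - 1" using k by simp
    have ee1: "2*k-1+1 = 2*k" by simp
    have Kk: "u k*C*a k = a k*u k" using K[OF k1, unfolded ee1] unfolding u_def a_def .
    have ee2: "2*(k-1) = 2*k-2" by simp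
    have E1k: "u k*C*u (k-1) = 1 + a k" unfolding u_def a_def ee2 using RE[of k] .
    have ee3: "2*(k+1)-1 = 2*k+1" by simp
    have O1k: "a (k+1)*C*a k = 1 + u k^4" unfolding u_def a_def ee3 using RO[of k] .
    have ee4: "2*(k+1)-2 = 2*k" by simp
    have E2k: "u (k+1)*C*u k = 1 + a (k+1)" unfolding u_def a_def using RE[of "k+1", unfolded ee4] .
    note S = state_lemma[OF anz[of k] unz[of k] Kk E1k O1k E2k]
    have Q: "1 + u k^4 \<noteq> 0" using O1k anz[of k] anz[of "k+1"] C0 by (metis no_zero_divisors)
    show "?thesis k" using S Q unfolding Xk_def by simp
  qed
  have GI: "\<And>k. 1 \<le> k \<Longrightarrow> Gf (Xk k) (u k) = Gf X Y"
  proof -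
    fix k :: int assume "1 \<le> k"
    thus "Gf (Xk k) (u k) = Gf X Y"
    proof (induction k rule: int_ge_induct)
      case base
      have "Xk 1 = X" unfolding Xk_def u_def a_def using Y0 by (simp add: R1 R2 mult.assoc mi2)
      moreover have "u 1 = Y" unfolding u_def by (simp add: R2)
      ultimately show ?case by simp
    next
      case (step k)
      note S = SL[OF step.hyps]
      have s2: "a (k+1) = (1+u k^4)*inverse (Xk k)" using S by blast
      have s3: "u (k+1) = (1+Xk k+u k^4)*inverse (u k)*inverse (Xk k)" using S by blast
      have Q0: "1 + u k^4 \<noteq> 0" using S by blast
      have P0: "1 + Xk k + u k^4 \<noteq> 0"
      proof
        assume "1 + Xk k + u k^4 = 0"
        hence "u (k+1) = 0" using s3 by simp
        with unz show False by blast
      qed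
      have "Gf (Xk (k+1)) (u (k+1)) = Gf (inverse (u (k+1)) * a (k+1) * u (k+1)) (u (k+1))"
        by (simp add: Xk_def)
      also have "\<dots> = Gf (inverse ((1+Xk k+u k^4)*inverse (u k)*inverse (Xk k)) * ((1+u k^4)*inverse (Xk k))
            * ((1+Xk k+u k^4)*inverse (u k)*inverse (Xk k))) ((1+Xk k+u k^4)*inverse (u k)*inverse (Xk k))"
        by (simp only: s2 s3)
      also have "\<dots> = Gf (Xk k) (u k)" by (rule L2[OF Xknz unz Q0 P0])
      finally show ?case using step.IH by simp
    qed
  qed
  have rec: "\<And>k. 1 \<le> k \<Longrightarrow> u (k+1) + C*u (k-1) = Gf X Y * u k"
  proof -
    fix k :: int assume k: "1 \<le> k"
    have "(u (k+1) + C*u (k-1))*inverse (u k) = Gf X Y" using conjunct1[OF SL[OF k]] GI[OF k] by (simp only:)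
    hence "(u (k+1) + C*u (k-1))*inverse (u k) * u k = Gf X Y * u k" by simp
    thus "u (k+1) + C*u (k-1) = Gf X Y * u k" using unz[of k] by (simp add: mult.assoc)
  qed
  define y1 where "y1 = (Y^3 + (1 + X) * inverse Y) * inverse X * inverse Y"
  define y2 where "y2 = (Y + (1 + X) * inverse Y ^ 2 * (1 + X) * inverse Y) * inverse X * inverse Y"
  define y3 where "y3 = (1 + X) * inverse Y ^ 2"
  have yA: "y1 + y3 = Gf X Y" unfolding y1_def y3_def using y_identities(1)[OF X0 Y0] .
  have yB: "y2 - y3*y1 = - C" unfolding y1_def y2_def y3_def C_def using y_identities(2)[OF X0 Y0] .
  have u1: "u 1 = Y" unfolding u_def by (simp add: R2)
  have Cu0: "C * u 0 = (1+X)*inverse Y"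
  proof -
    have "R 2 * C * R 0 = 1 + R 1" using RE[of 1] by simp
    hence "Y * C * u 0 = 1 + Y*X*inverse Y" unfolding u_def by (simp add: R1 R2)
    hence "inverse Y * (Y * C * u 0) = inverse Y * (1 + Y*X*inverse Y)" by simp
    thus ?thesis using Y0 by (simp add: mult.assoc mi2 algebra_simps)
  qed
  have v1: "u 2 = y1 * u 1"
  proof -
    have "u 2 + C * u 0 = Gf X Y * u 1" using rec[of 1] by simp
    hence "u 2 = (y1 + y3) * Y - (1+X)*inverse Y" unfolding yA[symmetric] Cu0 u1 by (simp add: algebra_simps)
    also have "y3 * Y = (1+X)*inverse Y" unfolding y3_def using Y0 by (simp add: power2_eq_square mult.assoc)
    hence "(y1 + y3) * Y - (1+X)*inverse Y = y1 * Y" by (simp add: algebra_simps)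
    finally show ?thesis using u1 by simp
  qed
  have main: "Abs_fps (\<lambda>n. u (int n + 1)) = inverse (1 - fps_X * fps_const y1
                       - fps_X ^ 2 * inverse (1 - fps_X * fps_const y3) * fps_const y2)
            * fps_const (u (int 0 + 1))"
  proof (rule fps_part)
    show "u (int 1 + 1) = y1 * u (int 0 + 1)" using v1 by simp
    fix n :: nat
    have ee: "int (n+2) + 1 = int n + 2 + 1" "int (n+1) + 1 = int n + 2" "int n + 2 - 1 = int n + 1" by simp_all
    have r: "u (int n + 2 + 1) + C * u (int n + 2 - 1) = Gf X Y * u (int n + 2)" using rec[of "int n + 2"] by simp
    show "u (int (n+2) + 1) = (y1+y3)*u (int (n+1) + 1) + (y2 - y3*y1)*u (int n + 1)"
      unfolding ee yA yB using r[unfolded ee(3)] by (simp add: algebra_simps)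
  qed
  show ?thesis unfolding Let_def using main unfolding u_def y1_def y2_def y3_def by simp
qed


end
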